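(* Let $F$ be the free group on $x,y$, $H<F$ the index-2 subgroup of elements of even total exponent in $y$, $\psi:H\to F$ the homomorphism with $\psi(x)=y$, $\psi(y^2)=y^{-1}x^{-1}$, $\psi(y^{-1}xy)=1$, and $\widehat\psi:F\to F$ given by $\widehat\psi(w)=\psi(w)$ for $w\in H$ and $\widehat\psi(w)=\psi(y^{-1}w)$ for $w\notin H$. Then for every $w\in F$ there is $k\ge0$ such that \[\widehat\psi^{\circ k}(w)\in\mathcal{N}=\{1,\,x,\,y,\,x^{-1},\,y^{-1},\,xy,\,y^{-1}x^{-1}\}.\]
   Context: $H$ is free on $x,y^2,y^{-1}xy$, so $\psi$ is well defined; $\widehat\psi^{\circ k}$ is the $k$-fold iterate of $\widehat\psi$. *)

theory Defs
  imports "HOL-Algebra.Group"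
begin

text \<open>The free group F on two generators x, y, realised as the group of
freely reduced words. A letter is a generator together with a flag
(True = inverse letter).\<close>

datatype gen = Gx | Gy

type_synonym letter = "gen \<times> bool"

definition inv_letter :: "letter \<Rightarrow> letter" where
  "inv_letter a = (fst a, \<not> snd a)"

fun red :: "letter list \<Rightarrow> letter list" where
  "red [] = []"
| "red (a # w) = (case red w of
       [] \<Rightarrow> [a]
     | b # v \<Rightarrow> (if b = inv_letter a then v else a # b # v))"

definition reduced :: "letter list \<Rightarrow> bool" where
  "reduced w \<longleftrightarrow> (\<forall>i. Suc i < length w \<longrightarrow> w ! Suc i \<noteq> inv_letter (w ! i))"

definition free_group2 :: "letter list monoid" where
  "free_group2 = \<lparr> carrier = {w. reduced w},
                   mult = (\<lambda>u v. red (u @ v)),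
                   one = [] \<rparr>"

definition gx :: "letter list" where "gx = [(Gx, False)]"
definition gy :: "letter list" where "gy = [(Gy, False)]"
definition gx_inv :: "letter list" where "gx_inv = [(Gx, True)]"
definition gy_inv :: "letter list" where "gy_inv = [(Gy, True)]"

definition y_exp :: "letter list \<Rightarrow> int" where
  "y_exp w = (\<Sum>a\<leftarrow>w. if fst a = Gy then (if snd a then -1 else 1) else 0)"

definition H_set :: "letter list set" where
  "H_set = {w \<in> carrier free_group2. even (y_exp w)}"

definition psi_hat :: "(letter list \<Rightarrow> letter list) \<Rightarrow> letter list \<Rightarrow> letter list" where
  "psi_hat \<psi> w = (if w \<in> H_set then \<psi> w else \<psi> (gy_inv \<otimes>\<^bsub>free_group2\<^esub> w))"

definition N_set :: "letter list set" where
  "N_set = {[], gx, gy, gx_inv, gy_inv, gx @ gy, gy_inv @ gx_inv}"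

end

theory Submission
  imports Defs
begin


lemma inv_inv[simp]: "inv_letter (inv_letter a) = a"
  by (simp add: inv_letter_def)
lemma inv_neq[simp]: "inv_letter a \<noteq> a" "a \<noteq> inv_letter a"
  by (auto simp: inv_letter_def prod_eq_iff)
lemma inv_letter_eq_iff[simp]: "inv_letter a = inv_letter b \<longleftrightarrow> a = b"
  by (metis inv_inv)

lemma reduced_Nil[simp]: "reduced []" by (simp add: reduced_def)

lemma reduced_Cons: "reduced (a # w) \<longleftrightarrow> reduced w \<and> (w \<noteq> [] \<longrightarrow> hd w \<noteq> inv_letter a)"
proof
  assume r: "reduced (a # w)"
  have "reduced w" unfolding reduced_def
  proof (intro allI impI)
    fix i assume "Suc i < length w"
    with r show "w ! Suc i \<noteq> inv_letter (w ! i)"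
      unfolding reduced_def by (metis Suc_less_eq length_Cons nth_Cons_Suc)
  qed
  moreover have "w \<noteq> [] \<longrightarrow> hd w \<noteq> inv_letter a"
    using r unfolding reduced_def by (metis hd_conv_nth length_Cons length_greater_0_conv nth_Cons_0 nth_Cons_Suc Suc_less_eq)
  ultimately show "reduced w \<and> (w \<noteq> [] \<longrightarrow> hd w \<noteq> inv_letter a)" by blast
next
  assume h: "reduced w \<and> (w \<noteq> [] \<longrightarrow> hd w \<noteq> inv_letter a)"
  show "reduced (a # w)" unfolding reduced_def
  proof (intro allI impI)
    fix i assume i: "Suc i < length (a # w)"
    show "(a # w) ! Suc i \<noteq> inv_letter ((a # w) ! i)"
    proof (cases i)
      case 0 then show ?thesis using h i by (auto simp: hd_conv_nth)
    next
      case (Suc j) then show ?thesis using h i unfolding reduced_def by auto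
    qed
  qed
qed

lemma reduced_Cons_Cons[simp]: "reduced (a # b # w) \<longleftrightarrow> b \<noteq> inv_letter a \<and> reduced (b # w)"
  using reduced_Cons[of a "b#w"] by auto
lemma reduced_single[simp]: "reduced [a]" by (simp add: reduced_Cons)

definition cr :: "letter \<Rightarrow> letter list \<Rightarrow> letter list" where
  "cr a w = (case w of [] \<Rightarrow> [a] | b # v \<Rightarrow> (if b = inv_letter a then v else a # b # v))"

lemma red_Cons: "red (a # w) = cr a (red w)"
  by (simp add: cr_def)

declare red.simps(2)[simp del]

lemma cr_reduced: "reduced w \<Longrightarrow> reduced (cr a w)"
  by (auto simp: cr_def reduced_Cons split: list.splits)

lemma red_reduced[simp]: "reduced (red w)"
  by (induction w) (auto simp: red_Cons cr_reduced)

lemma reduced_red: "reduced w \<Longrightarrow> red w = w"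
  by (induction w) (auto simp: red_Cons cr_def reduced_Cons split: list.splits)

lemma red_red[simp]: "red (red w) = red w"
  by (simp add: reduced_red)

lemma cr_cancel: "reduced w \<Longrightarrow> cr a (cr (inv_letter a) w) = w"
  by (cases w) (auto simp: cr_def reduced_Cons split: list.splits)

lemma red_append_red_right: "red (u @ red v) = red (u @ v)"
  by (induction u) (auto simp: red_Cons)

lemma red_append_red_left: "red (red u @ v) = red (u @ v)"
proof (induction u)
  case Nil then show ?case by (simp add: red_append_red_right)
next
  case (Cons a u)
  have "red ((a # u) @ v) = cr a (red (red u @ v))" using Cons by (simp add: red_Cons)
  also have "\<dots> = red (red (a # u) @ v)"
  proof (cases "red u")
    case Nil then show ?thesis by (simp add: red_Cons cr_def)
  next
    case (Cons b r)
    show ?thesis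
    proof (cases "b = inv_letter a")
      case True
      have "cr a (red (red u @ v)) = cr a (cr b (red (r @ v)))"
        using Cons by (simp add: red_Cons)
      also have "\<dots> = red (r @ v)" using True cr_cancel[of "red (r@v)" "inv_letter b"] by simp
      finally show ?thesis using Cons True by (simp add: red_Cons cr_def)
    next
      case False
      then show ?thesis using Cons by (simp add: red_Cons cr_def)
    qed
  qed
  finally show ?case by simp
qed

lemma red_append_red_both: "red (red u @ red v) = red (u @ v)"
  by (simp add: red_append_red_left red_append_red_right)

lemma red_cancel_mid: "red (p @ a # inv_letter a # q) = red (p @ q)"
proof -
  have "red (a # inv_letter a # q) = red q"
    using cr_cancel[of "red q" "a"] cr_cancel[of "red q" "inv_letter a"] by (simp add: red_Cons)
  then show ?thesis by (metis red_append_red_right)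
qed

definition inv_word :: "letter list \<Rightarrow> letter list" where
  "inv_word u = rev (map inv_letter u)"

lemma red_inv_word: "red (inv_word u @ u) = []"
proof (induction u)
  case Nil then show ?case by (simp add: inv_word_def)
next
  case (Cons a u)
  have "red (inv_word (a # u) @ a # u) = red (inv_word u @ inv_letter a # inv_letter (inv_letter a) # u)"
    by (simp add: inv_word_def)
  also have "\<dots> = red (inv_word u @ u)" by (rule red_cancel_mid)
  finally show ?case using Cons by simp
qed

lemma red_inv_word2: "red (u @ inv_word u) = []"
  using red_inv_word[of "inv_word u"] by (simp add: inv_word_def rev_map comp_def)

lemma red_Nil_prefix: "red p = [] \<Longrightarrow> red (p @ q) = red q"
  by (metis append_Nil red_append_red_left)

lemma fg_carrier: "carrier free_group2 = {w. reduced w}" by (simp add: free_group2_def)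
lemma fg_mult: "x \<otimes>\<^bsub>free_group2\<^esub> y = red (x @ y)" by (simp add: free_group2_def)
lemma fg_one: "\<one>\<^bsub>free_group2\<^esub> = []" by (simp add: free_group2_def)

lemma fg_group: "group free_group2"
proof (rule groupI)
  fix x y z
  show "x \<otimes>\<^bsub>free_group2\<^esub> y \<otimes>\<^bsub>free_group2\<^esub> z = x \<otimes>\<^bsub>free_group2\<^esub> (y \<otimes>\<^bsub>free_group2\<^esub> z)"
    by (simp add: fg_mult red_append_red_left red_append_red_right)
next
  fix x assume "x \<in> carrier free_group2"
  then show "\<one>\<^bsub>free_group2\<^esub> \<otimes>\<^bsub>free_group2\<^esub> x = x"
    by (simp add: fg_mult fg_one fg_carrier reduced_red)
next
  fix x assume "x \<in> carrier free_group2"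
  then show "\<exists>y\<in>carrier free_group2. y \<otimes>\<^bsub>free_group2\<^esub> x = \<one>\<^bsub>free_group2\<^esub>"
    by (intro bexI[of _ "red (inv_word x)"]) (auto simp: fg_mult fg_one fg_carrier red_append_red_left red_inv_word)
qed (auto simp: fg_mult fg_one fg_carrier)

lemma fg_inv: "reduced x \<Longrightarrow> inv\<^bsub>free_group2\<^esub> x = red (inv_word x)"
  by (rule group.inv_equality[OF fg_group]) (auto simp: fg_mult fg_one fg_carrier red_append_red_left red_inv_word)



section \<open>Generic transducers\<close>

fun run :: "(bool \<Rightarrow> letter \<Rightarrow> letter list \<times> bool) \<Rightarrow> bool \<Rightarrow> letter list \<Rightarrow> letter list" where
  "run e s [] = []"
| "run e s (a # w) = fst (e s a) @ run e (snd (e s a)) w"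

fun fin :: "(bool \<Rightarrow> letter \<Rightarrow> letter list \<times> bool) \<Rightarrow> bool \<Rightarrow> letter list \<Rightarrow> bool" where
  "fin e s [] = s"
| "fin e s (a # w) = fin e (snd (e s a)) w"

lemma run_append: "run e s (u @ v) = run e s u @ run e (fin e s u) v"
  by (induction u arbitrary: s) auto

definition good :: "(bool \<Rightarrow> letter \<Rightarrow> letter list \<times> bool) \<Rightarrow> bool" where
  "good e \<longleftrightarrow> (\<forall>s a. snd (e (snd (e s a)) (inv_letter a)) = s \<and>
       red (fst (e s a) @ fst (e (snd (e s a)) (inv_letter a))) = [])"

lemma run_cr: assumes "good e" shows "red (run e s (cr a r)) = red (run e s (a # r))"
proof (cases r)
  case Nil then show ?thesis by (simp add: cr_def)
next
  case (Cons b v)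
  show ?thesis
  proof (cases "b = inv_letter a")
    case True
    let ?o1 = "fst (e s a)" and ?s1 = "snd (e s a)"
    have g: "snd (e ?s1 (inv_letter a)) = s" "red (?o1 @ fst (e ?s1 (inv_letter a))) = []"
      using assms unfolding good_def by blast+
    have "red (run e s (a # r)) = red ((?o1 @ fst (e ?s1 (inv_letter a))) @ run e s v)"
      using Cons True g by simp
    also have "\<dots> = red (run e s v)"
      by (rule red_Nil_prefix[OF g(2)])
    finally show ?thesis using Cons True by (simp add: cr_def)
  next
    case False then show ?thesis using Cons by (simp add: cr_def)
  qed
qed

lemma red_run_red: assumes "good e" shows "red (run e s (red u)) = red (run e s u)"
proof (induction u arbitrary: s)
  case Nil then show ?case by simp
next
  case (Cons a u)
  have "red (run e s (red (a # u))) = red (run e s (a # red u))"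
    by (simp add: red_Cons run_cr[OF assms])
  also have "\<dots> = red (fst (e s a) @ red (run e (snd (e s a)) (red u)))"
    by (simp add: red_append_red_right)
  also have "\<dots> = red (run e s (a # u))"
    using Cons by (simp add: red_append_red_right)
  finally show ?case .
qed

lemma red_Cons_red[simp]: "red (a # red w) = red (a # w)"
  by (simp add: red_Cons)

lemma red_Cons_Cons_red[simp]: "red (a # b # red w) = red (a # b # w)"
  by (simp add: red_Cons)

lemma length_cr: "length (cr a w) \<le> Suc (length w)"
  by (auto simp: cr_def split: list.splits)

lemma length_red: "length (red w) \<le> length w"
proof (induction w)
  case (Cons a w) then show ?case using length_cr[of a "red w"] by (simp add: red_Cons)
qed simp

definition ye :: "letter \<Rightarrow> int" where
  "ye a = (if fst a = Gy then (if snd a then -1 else 1) else 0)"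

lemma y_exp_Nil[simp]: "y_exp [] = 0" by (simp add: y_exp_def)
lemma y_exp_Cons[simp]: "y_exp (a # w) = ye a + y_exp w" by (simp add: y_exp_def ye_def)
lemma y_exp_append[simp]: "y_exp (u @ v) = y_exp u + y_exp v" by (induction u) auto
lemma ye_inv[simp]: "ye (inv_letter a) = - ye a" by (simp add: ye_def inv_letter_def)

lemma y_exp_cr: "y_exp (cr a w) = ye a + y_exp w"
  by (auto simp: cr_def split: list.splits)

lemma y_exp_red[simp]: "y_exp (red w) = y_exp w"
  by (induction w) (auto simp: red_Cons y_exp_cr)

lemma H_set_iff: "w \<in> H_set \<longleftrightarrow> reduced w \<and> even (y_exp w)"
  by (simp add: H_set_def fg_carrier)

abbreviation "lx \<equiv> (Gx,False)"
abbreviation "lX \<equiv> (Gx,True)"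
abbreviation "ly \<equiv> (Gy,False)"
abbreviation "lY \<equiv> (Gy,True)"

definition exy :: "bool \<Rightarrow> letter \<Rightarrow> letter list \<times> bool" where
  "exy s a = (if fst a = Gx then (if s then [] else [(Gy, snd a)], s)
     else if snd a then (if s then [] else [(Gx,False),(Gy,False)], \<not> s)
     else (if s then [(Gy,True),(Gx,True)] else [], \<not> s))"

lemmas red_eval = red.simps(1) red_Cons cr_def inv_letter_def

lemma good_exy: "good exy"
  unfolding good_def
proof (intro allI)
  fix s :: bool and a :: letter
  obtain g b where a: "a = (g,b)" by (cases a)
  show "snd (exy (snd (exy s a)) (inv_letter a)) = s \<and>
       red (fst (exy s a) @ fst (exy (snd (exy s a)) (inv_letter a))) = []"
    unfolding a by (cases g; cases b; cases s) (simp_all add: exy_def red_eval)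
qed



lemma left_cancel: "red (q @ p) = red (q @ r) \<Longrightarrow> red p = red r"
proof -
  assume h: "red (q @ p) = red (q @ r)"
  have "red p = red (inv_word q @ red (q @ p))"
    by (metis append.assoc red_Nil_prefix red_append_red_right red_inv_word)
  also have "\<dots> = red r" using h
    by (metis append.assoc red_Nil_prefix red_append_red_right red_inv_word)
  finally show ?thesis .
qed

context
  fixes \<psi> :: "letter list \<Rightarrow> letter list"
  assumes hom: "\<psi> \<in> hom (free_group2\<lparr>carrier := H_set\<rparr>) free_group2"
    and px: "\<psi> gx = gy"
    and py2: "\<psi> (gy \<otimes>\<^bsub>free_group2\<^esub> gy) = gy_inv \<otimes>\<^bsub>free_group2\<^esub> gx_inv"
    and pc: "\<psi> (gy_inv \<otimes>\<^bsub>free_group2\<^esub> gx \<otimes>\<^bsub>free_group2\<^esub> gy) = \<one>\<^bsub>free_group2\<^esub>"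
begin

lemma hm: "u \<in> H_set \<Longrightarrow> v \<in> H_set \<Longrightarrow> \<psi> (red (u @ v)) = red (\<psi> u @ \<psi> v)"
  using hom by (auto simp: hom_def fg_mult)

lemma hc: "u \<in> H_set \<Longrightarrow> reduced (\<psi> u)"
  using hom by (auto simp: hom_def fg_carrier)

lemma psi_nil: "\<psi> [] = []"
proof -
  have H: "[] \<in> H_set" by (simp add: H_set_iff)
  let ?z = "\<psi> []"
  have "red (?z @ []) = red (?z @ ?z)" using hm[OF H H] hc[OF H] by (simp add: reduced_red)
  then have "red [] = red ?z" by (rule left_cancel)
  then show ?thesis using hc[OF H] by (simp add: reduced_red)
qed

lemma psi_inv: "u \<in> H_set \<Longrightarrow> v \<in> H_set \<Longrightarrow> red (u @ v) = [] \<Longrightarrow> \<psi> v = red (inv_word (\<psi> u))"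
proof -
  assume u: "u \<in> H_set" and v: "v \<in> H_set" and uv: "red (u @ v) = []"
  have "red (\<psi> u @ \<psi> v) = red (\<psi> u @ inv_word (\<psi> u))"
    using hm[OF u v] uv psi_nil red_inv_word2 by simp
  then have "red (\<psi> v) = red (inv_word (\<psi> u))" by (rule left_cancel)
  then show ?thesis using hc[OF v] by (simp add: reduced_red)
qed


lemma psi_x: "\<psi> [lx] = [ly]" using px by (simp add: gx_def gy_def)

lemma psi_X: "\<psi> [lX] = [lY]"
  using psi_inv[of "[lx]" "[lX]"] psi_x by (simp add: H_set_iff ye_def red_eval inv_word_def)

lemma psi_yy: "\<psi> [ly,ly] = [lY,lX]"
  using py2 by (simp add: gy_def gy_inv_def gx_inv_def fg_mult red_eval)

lemma psi_YY: "\<psi> [lY,lY] = [lx,ly]"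
  using psi_inv[of "[ly,ly]" "[lY,lY]"] psi_yy by (simp add: H_set_iff ye_def red_eval inv_word_def)

lemma psi_Yxy: "\<psi> [lY,lx,ly] = []"
  using pc by (simp add: gy_def gy_inv_def gx_def fg_mult fg_one red_eval)

lemma psi_YXy: "\<psi> [lY,lX,ly] = []"
  using psi_inv[of "[lY,lx,ly]" "[lY,lX,ly]"] psi_Yxy by (simp add: H_set_iff ye_def red_eval inv_word_def)

lemma psi_yxY: "\<psi> [ly,lx,lY] = []"
proof -
  have 1: "[lY,lx,ly] \<in> H_set" "[lY,lY] \<in> H_set" "[ly,ly] \<in> H_set" "red ([lY,lx,ly] @ [lY,lY]) \<in> H_set"
    by (simp_all add: H_set_iff ye_def red_eval)
  have "\<psi> (red ([lY,lx,ly] @ [lY,lY])) = [lx,ly]"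
    using hm[OF 1(1) 1(2)] psi_Yxy psi_YY by (simp add: red_eval)
  then have "\<psi> (red ([ly,ly] @ red ([lY,lx,ly] @ [lY,lY]))) = []"
    using hm[OF 1(3) 1(4)] psi_yy by (simp add: red_eval)
  then show ?thesis by (simp add: red_eval)
qed

lemma psi_yXY: "\<psi> [ly,lX,lY] = []"
  using psi_inv[of "[ly,lx,lY]" "[ly,lX,lY]"] psi_yxY by (simp add: H_set_iff ye_def red_eval inv_word_def)

lemma psi_conj: "\<psi> [(Gy,b),(Gx,c),(Gy,\<not>b)] = []"
  using psi_yXY psi_yxY psi_YXy psi_Yxy by (cases b; cases c) auto

lemma psi_formula: "w \<in> H_set \<Longrightarrow> \<psi> w = red (run exy False w)"
proof (induction "length w" arbitrary: w rule: less_induct)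
  case less
  show ?case
  proof (cases w)
    case Nil then show ?thesis using psi_nil by simp
  next
    case (Cons a w1)
    obtain g b where a: "a = (g,b)" by (cases a)
    have wr: "reduced w" "even (y_exp w)" using less.prems by (auto simp: H_set_iff)
    show ?thesis
    proof (cases g)
      case Gx
      have w1: "w1 \<in> H_set" using wr Cons a Gx by (auto simp: H_set_iff reduced_Cons ye_def)
      have ga: "[a] \<in> H_set" using a Gx by (simp add: H_set_iff ye_def)
      have "\<psi> w = \<psi> (red ([a] @ w1))" using wr Cons by (simp add: reduced_red)
      also have "\<dots> = red ([(Gy,b)] @ red (run exy False w1))"
        using hm[OF ga w1] less.hyps[of w1] w1 Cons a Gx psi_x psi_X by (cases b) auto
      also have "\<dots> = red (run exy False w)"
        using Cons a Gx by (simp add: red_append_red_right exy_def)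
      finally show ?thesis .
    next
      case Gy
      have "w1 \<noteq> []" using wr Cons a Gy by (cases b) (auto simp: ye_def)
      then obtain a2 w2 where w1: "w1 = a2 # w2" by (cases w1) auto
      obtain g2 b2 where a2: "a2 = (g2,b2)" by (cases a2)
      show ?thesis
      proof (cases g2)
        case Gy
        have bb: "b2 = b" using wr Cons w1 a a2 Gy \<open>g = Gy\<close> by (auto simp: inv_letter_def)
        have w2: "w2 \<in> H_set" using wr Cons w1 a a2 Gy \<open>g = Gy\<close> bb
          by (auto simp: H_set_iff reduced_Cons ye_def)
        have ga: "[a,a] \<in> H_set" using a \<open>g = Gy\<close> by (simp add: H_set_iff ye_def)
        have "\<psi> w = \<psi> (red ([a,a] @ w2))" using wr Cons w1 a2 a Gy bb \<open>g = Gy\<close> by (simp add: reduced_red)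
        also have "\<dots> = red (\<psi> [a,a] @ red (run exy False w2))"
          using hm[OF ga w2] less.hyps[of w2] w2 Cons w1 by auto
        also have "\<dots> = red (run exy False w)"
          using Cons w1 a a2 Gy \<open>g = Gy\<close> bb psi_yy psi_YY
          by (cases b) (simp_all add: red_append_red_right exy_def)
        finally show ?thesis .
      next
        case Gx
        define w3 where "w3 = red ((Gy,b) # w2)"
        define cc where "cc = [(Gy,b),(Gx,b2),(Gy,\<not>b)]"
        have w3H: "w3 \<in> H_set" using wr Cons w1 a a2 Gx \<open>g = Gy\<close>
          by (auto simp: H_set_iff w3_def ye_def)
        have w3l: "length w3 < length w"
          using length_red[of "(Gy,b) # w2"] Cons w1 by (simp add: w3_def)
        have ccH: "cc \<in> H_set" by (cases b) (simp_all add: cc_def H_set_iff ye_def inv_letter_def)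
        have "red (cc @ w3) = red (cc @ (Gy,b) # w2)"
          unfolding w3_def by (rule red_append_red_right)
        also have "\<dots> = red ([(Gy,b),(Gx,b2)] @ (Gy,\<not>b) # inv_letter (Gy,\<not>b) # w2)"
          by (simp add: cc_def inv_letter_def)
        also have "\<dots> = red ([(Gy,b),(Gx,b2)] @ w2)" by (rule red_cancel_mid)
        also have "\<dots> = w" using wr Cons w1 a a2 Gx \<open>g = Gy\<close> by (simp add: reduced_red)
        finally have wcc: "red (cc @ w3) = w" .
        have "\<psi> w = red (\<psi> cc @ \<psi> w3)" using hm[OF ccH w3H] wcc by simp
        also have "\<dots> = \<psi> w3" using psi_conj hc[OF w3H] by (simp add: cc_def reduced_red)
        also have "\<dots> = red (run exy False w3)" using less.hyps[OF w3l w3H] .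
        also have "\<dots> = red (run exy False ((Gy,b) # w2))"
          unfolding w3_def by (rule red_run_red[OF good_exy])
        also have "\<dots> = red (run exy False (cc @ (Gy,b) # w2))"
        proof -
          have f: "fin exy False cc = False" and r: "red (run exy False cc) = []"
            by (cases b; cases b2; simp add: cc_def exy_def red_eval)+
          show ?thesis by (simp add: run_append f red_Nil_prefix[OF r])
        qed
        also have "\<dots> = red (run exy False w)"
          using red_run_red[OF good_exy, of False "cc @ (Gy,b) # w2"] wcc
          \<open>red (cc @ w3) = red (cc @ (Gy,b) # w2)\<close> by simp
        finally show ?thesis .
      qed
    qed
  qed
qed

end



definition phx :: "letter list \<Rightarrow> letter list" where
  "phx w = red (run exy False (if even (y_exp w) then w else lY # w))"

context
  fixes \<psi> :: "letter list \<Rightarrow> letter list"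
  assumes hom: "\<psi> \<in> hom (free_group2\<lparr>carrier := H_set\<rparr>) free_group2"
    and px: "\<psi> gx = gy"
    and py2: "\<psi> (gy \<otimes>\<^bsub>free_group2\<^esub> gy) = gy_inv \<otimes>\<^bsub>free_group2\<^esub> gx_inv"
    and pc: "\<psi> (gy_inv \<otimes>\<^bsub>free_group2\<^esub> gx \<otimes>\<^bsub>free_group2\<^esub> gy) = \<one>\<^bsub>free_group2\<^esub>"
begin

lemma psi_hat_phx: "reduced w \<Longrightarrow> psi_hat \<psi> w = phx w"
proof -
  assume r: "reduced w"
  note pf = psi_formula[OF hom px py2 pc]
  show ?thesis
  proof (cases "even (y_exp w)")
    case True
    then have "w \<in> H_set" using r by (simp add: H_set_iff)
    then show ?thesis using True pf by (simp add: psi_hat_def phx_def)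
  next
    case False
    then have nH: "w \<notin> H_set" by (simp add: H_set_iff)
    have "gy_inv \<otimes>\<^bsub>free_group2\<^esub> w = red (lY # w)" by (simp add: fg_mult gy_inv_def)
    moreover have "red (lY # w) \<in> H_set" using False by (simp add: H_set_iff ye_def)
    ultimately show ?thesis using nH False pf red_run_red[OF good_exy, of False "lY # w"]
      by (simp add: psi_hat_def phx_def)
  qed
qed

lemma psi_hat_iter: "reduced w \<Longrightarrow> (psi_hat \<psi> ^^ k) w = (phx ^^ k) w"
proof (induction k)
  case (Suc k)
  have "reduced ((phx ^^ k) w)"
    using Suc.prems by (cases k) (simp_all add: phx_def)
  then show ?case using Suc psi_hat_phx by simp
qed simp

end

section \<open>Change of basis t = xy\<close>

definition sb :: "letter \<Rightarrow> letter list" where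
  "sb a = (if fst a = Gx then (if snd a then [ly, lX] else [lx, lY]) else [a])"
definition esb :: "bool \<Rightarrow> letter \<Rightarrow> letter list \<times> bool" where
  "esb s a = (sb a, s)"
definition sb' :: "letter \<Rightarrow> letter list" where
  "sb' a = (if fst a = Gx then (if snd a then [lY, lX] else [lx, ly]) else [a])"
definition esb' :: "bool \<Rightarrow> letter \<Rightarrow> letter list \<times> bool" where
  "esb' s a = (sb' a, s)"

definition ety :: "bool \<Rightarrow> letter \<Rightarrow> letter list \<times> bool" where
  "ety s a = ((if fst a = Gx then (if snd a then (if s then [lY] else [lx]) else (if s then [lX] else [ly]))
       else (if snd a then (if s then [] else [lx]) else (if s then [lX] else []))), \<not> s)"

definition toTY :: "letter list \<Rightarrow> letter list" where
  "toTY w = red (run esb False w)"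
definition toXY :: "letter list \<Rightarrow> letter list" where
  "toXY w = red (run esb' False w)"

definition phy :: "letter list \<Rightarrow> letter list" where
  "phy v = red (run ety False (if even (length v) then v else lY # v))"

lemma esb_simps[simp]: "fst (esb s a) = sb a" "snd (esb s a) = s" "fst (esb' s a) = sb' a" "snd (esb' s a) = s"
  by (simp_all add: esb_def esb'_def)

lemma fin_esb'[simp]: "fin esb' s u = s"
  by (induction u arbitrary: s) simp_all

lemma good_esb: "good esb"
  unfolding good_def
proof (intro allI)
  fix s :: bool and a :: letter
  obtain g b where a: "a = (g,b)" by (cases a)
  show "snd (esb (snd (esb s a)) (inv_letter a)) = s \<and>
       red (fst (esb s a) @ fst (esb (snd (esb s a)) (inv_letter a))) = []"
    unfolding a by (cases g; cases b) (simp_all add: esb_def sb_def red_eval)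
qed

lemma good_esb': "good esb'"
  unfolding good_def
proof (intro allI)
  fix s :: bool and a :: letter
  obtain g b where a: "a = (g,b)" by (cases a)
  show "snd (esb' (snd (esb' s a)) (inv_letter a)) = s \<and>
       red (fst (esb' s a) @ fst (esb' (snd (esb' s a)) (inv_letter a))) = []"
    unfolding a by (cases g; cases b) (simp_all add: esb'_def sb'_def red_eval)
qed

lemma good_ety: "good ety"
  unfolding good_def
proof (intro allI)
  fix s :: bool and a :: letter
  obtain g b where a: "a = (g,b)" by (cases a)
  show "snd (ety (snd (ety s a)) (inv_letter a)) = s \<and>
       red (fst (ety s a) @ fst (ety (snd (ety s a)) (inv_letter a))) = []"
    unfolding a by (cases g; cases b; cases s) (simp_all add: ety_def red_eval)
qed

lemma fin_esb[simp]: "fin esb s u = s"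
  by (induction u arbitrary: s) (simp_all add: esb_def)

lemma run_esb_Cons[simp]: "run esb s (a # u) = sb a @ run esb s u"
  by (simp add: esb_def)

lemma run_esb_append: "run esb s (u @ v) = run esb s u @ run esb s v"
  by (simp add: run_append)

lemma step_commute: "fin ety s (sb a) = snd (exy s a) \<and>
   red (run esb False (fst (exy s a))) = red (run ety s (sb a))"
proof -
  obtain g b where a: "a = (g,b)" by (cases a)
  show ?thesis unfolding a
    by (cases g; cases b; cases s) (simp_all add: exy_def ety_def sb_def red_eval)
qed

lemma commute: "red (run esb False (run exy s u)) = red (run ety s (run esb False u))"
proof (induction u arbitrary: s)
  case Nil then show ?case by simp
next
  case (Cons a u)
  have "red (run esb False (run exy s (a # u))) =
      red (red (run esb False (fst (exy s a))) @ red (run esb False (run exy (snd (exy s a)) u)))"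
    by (simp add: run_esb_append red_append_red_both)
  also have "\<dots> = red (red (run ety s (sb a)) @ red (run ety (fin ety s (sb a)) (run esb False u)))"
    using step_commute[of s a] Cons by simp
  also have "\<dots> = red (run ety s (run esb False (a # u)))"
    by (simp add: run_append red_append_red_both)
  finally show ?case .
qed

lemma even_length_cr: "even (length (cr a w)) \<longleftrightarrow> odd (length w)"
  by (auto simp: cr_def split: list.splits)

lemma even_length_red: "even (length (red w)) \<longleftrightarrow> even (length w)"
  by (induction w) (simp_all add: red_Cons even_length_cr)

lemma parity_esb: "even (length (run esb False w)) \<longleftrightarrow> even (y_exp w)"
proof (induction w)
  case (Cons a w)
  obtain g b where a: "a = (g,b)" by (cases a)
  show ?case using Cons unfolding a by (cases g; cases b) (simp_all add: sb_def ye_def)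
qed simp

lemma phy_red: "phy (red z) = red (run ety False (if even (length z) then z else lY # z))"
proof (cases "even (length z)")
  case True
  then show ?thesis by (simp add: phy_def even_length_red red_run_red[OF good_ety])
next
  case False
  have "red (run ety False (lY # red z)) = red (run ety False (red (lY # red z)))"
    by (rule red_run_red[OF good_ety, symmetric])
  also have "\<dots> = red (run ety False (red (lY # z)))" by simp
  also have "\<dots> = red (run ety False (lY # z))" by (rule red_run_red[OF good_ety])
  finally show ?thesis using False by (simp add: phy_def even_length_red)
qed

lemma toTY_phx: "toTY (phx w) = phy (toTY w)"
proof -
  have "toTY (phx w) = red (run esb False (run exy False (if even (y_exp w) then w else lY # w)))"
    by (simp add: toTY_def phx_def red_run_red[OF good_esb])
  also have "\<dots> = red (run ety False (run esb False (if even (y_exp w) then w else lY # w)))"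
    by (rule commute)
  also have "\<dots> = phy (toTY w)"
    by (simp add: toTY_def phy_red parity_esb sb_def)
  finally show ?thesis .
qed

lemma toTY_iter: "toTY ((phx ^^ k) w) = (phy ^^ k) (toTY w)"
  by (induction k) (simp_all add: toTY_phx)

lemma back_letter: "red (run esb' False (sb a)) = [a]"
proof -
  obtain g b where a: "a = (g,b)" by (cases a)
  show ?thesis unfolding a by (cases g; cases b) (simp_all add: sb_def esb'_def sb'_def red_eval)
qed

lemma back_raw: "red (run esb' False (run esb False w)) = red w"
proof (induction w)
  case (Cons a w)
  have "red (run esb' False (run esb False (a # w))) =
     red (red (run esb' False (sb a)) @ red (run esb' False (run esb False w)))"
    by (simp add: run_append red_append_red_both esb'_def)
  also have "\<dots> = red (a # w)" using Cons back_letter by simp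
  finally show ?case .
qed simp

lemma toXY_toTY: "reduced w \<Longrightarrow> toXY (toTY w) = w"
  by (simp add: toXY_def toTY_def red_run_red[OF good_esb'] back_raw reduced_red)

definition Nty :: "letter list set" where
  "Nty = {[], [lx], [lX], [ly], [lY], [lx,lY], [ly,lX]}"

lemma toXY_N: "v \<in> Nty \<Longrightarrow> toXY v \<in> N_set"
  by (auto simp: Nty_def N_set_def toXY_def esb'_def sb'_def red_eval gx_def gy_def gx_inv_def gy_inv_def)



fun P :: "letter \<Rightarrow> letter \<Rightarrow> letter list" where
  "P (Gx,False) (Gx,False) = [ly,lX]"
| "P (Gx,False) (Gy,False) = [ly,lX]"
| "P (Gx,False) (Gy,True) = [ly]"
| "P (Gy,False) (Gx,False) = [lX]"
| "P (Gy,False) (Gy,False) = [lX]"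
| "P (Gy,False) (Gx,True) = [lY]"
| "P (Gx,True) (Gx,True) = [lx,lY]"
| "P (Gx,True) (Gy,True) = [lx]"
| "P (Gy,True) (Gx,True) = [lx,lY]"
| "P (Gy,True) (Gy,True) = [lx]"
| "P _ _ = []"

fun sgp :: "letter list \<Rightarrow> letter list" where
  "sgp [] = []"
| "sgp [a] = P lY a"
| "sgp (a # b # w) = P a b @ sgp w"

definition sig :: "letter list \<Rightarrow> letter list" where
  "sig v = (if even (length v) then sgp v else sgp (lY # v))"

lemma letter_cases: obtains "a = lx" | "a = lX" | "a = ly" | "a = lY"
proof -
  obtain g b where "a = (g,b)" by (cases a)
  then show ?thesis using that by (cases g; cases b) auto
qed

lemma pair_ety: "red (fst (ety False a) @ fst (ety True b)) = P a b"
  by (cases a rule: letter_cases; cases b rule: letter_cases) (simp_all add: ety_def red_eval)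

lemma pair_ety_state: "snd (ety (snd (ety False a)) b) = False"
  by (simp add: ety_def)

lemma run_ety_sgp: "even (length u) \<Longrightarrow> red (run ety False u) = red (sgp u)"
proof (induction u rule: sgp.induct)
  case (3 a b w)
  have "red (run ety False (a # b # w)) =
      red (red (fst (ety False a) @ fst (ety True b)) @ red (run ety False w))"
    by (simp add: ety_def red_append_red_both)
  also have "\<dots> = red (P a b @ red (sgp w))" using 3 pair_ety by simp
  finally show ?case by (simp add: red_append_red_right)
qed simp_all

lemma phy_sig: "phy v = red (sig v)"
  by (simp add: phy_def sig_def run_ety_sgp)

lemma phy_red_sig: "phy (red z) = red (sig z)"
  by (simp add: phy_red sig_def run_ety_sgp)

lemma phy_phy: "phy (phy v) = red (sig (sig v))"
  by (simp only: phy_sig[of v] phy_red_sig)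

fun V :: "letter \<Rightarrow> nat" where
  "V (Gx,False) = 2" | "V (Gx,True) = 4" | "V (Gy,False) = 2" | "V (Gy,True) = 1"

definition kk :: "letter list \<Rightarrow> nat" where
  "kk X = (if even (length X) then length (sgp X) else length (sgp (tl X)))"
definition vv :: "letter list \<Rightarrow> nat" where
  "vv X = (if even (length X) then 0 else V (hd X))"

lemma P_len: "length (P a b) \<le> 2"
  by (cases a rule: letter_cases; cases b rule: letter_cases) simp_all

lemma A1: "3 * length (P a c) \<le> 4 + V c"
  by (cases a rule: letter_cases; cases c rule: letter_cases) simp_all

lemma A2s: "P a b = [b1,b2] \<Longrightarrow> (b1 = ly \<and> b2 = lX) \<or> (b1 = lx \<and> b2 = lY)"
  by (cases a rule: letter_cases; cases b rule: letter_cases) simp_all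

lemma A2t: "3 * length (P lX c) + 2 \<le> 4 + V c" "3 * length (P lY c) + 2 \<le> 4 + V c"
  by (cases c rule: letter_cases; simp)+

lemma A2: "P a b = [b1,b2] \<Longrightarrow> 3 * length (P b1 b2) \<le> 4 \<and> 3 * length (P b2 c) + V b1 \<le> 4 + V c"
  using A2s[of a b b1 b2] A2t[of c] by auto

lemma A3: "3 * length (P lY c) \<le> V c + 2"
  by (cases c rule: letter_cases) simp_all

lemma V_le: "V c \<le> 4"
  by (cases c rule: letter_cases) simp_all

lemma step_bound: "3 * kk (P a b @ X) + vv (P a b @ X) \<le> 3 * kk X + vv X + 4"
proof -
  have "length (P a b) = 0 \<or> length (P a b) = 1 \<or> length (P a b) = 2" using P_len[of a b] by arith
  then consider "P a b = []" | b1 where "P a b = [b1]" | b1 b2 where "P a b = [b1,b2]"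
    by (auto simp: length_Suc_conv numeral_2_eq_2)
  then show ?thesis
  proof cases
    case 1 then show ?thesis by simp
  next
    case (2 b1)
    show ?thesis
    proof (cases X)
      case Nil then show ?thesis using 2 V_le[of b1] by (simp add: kk_def vv_def)
    next
      case (Cons c X2)
      show ?thesis
      proof (cases "even (length X)")
        case True then show ?thesis using 2 V_le[of b1] Cons by (simp add: kk_def vv_def)
      next
        case False then show ?thesis using 2 A1[of b1 c] Cons by (simp add: kk_def vv_def)
      qed
    qed
  next
    case (3 b1 b2)
    note a2 = A2[OF 3, of "hd X"]
    show ?thesis
    proof (cases X)
      case Nil then show ?thesis using 3 a2 by (simp add: kk_def vv_def)
    next
      case (Cons c X2)
      show ?thesis
      proof (cases "even (length X)")
        case True then show ?thesis using 3 a2 Cons by (simp add: kk_def vv_def)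
      next
        case False then show ?thesis using 3 a2 Cons by (simp add: kk_def vv_def)
      qed
    qed
  qed
qed

lemma main_inv: "even (length u) \<Longrightarrow> 3 * kk (sgp u) + vv (sgp u) \<le> 2 * length u"
proof (induction u rule: sgp.induct)
  case 1 then show ?case by (simp add: kk_def vv_def)
next
  case (2 a) then show ?case by simp
next
  case (3 a b w)
  then have "3 * kk (sgp w) + vv (sgp w) \<le> 2 * length w" by simp
  then show ?case using step_bound[of a b "sgp w"] by simp
qed

lemma sig_bound_even: "even (length u) \<Longrightarrow> 3 * length (sig (sgp u)) \<le> 2 * length u + 2"
proof -
  assume e: "even (length u)"
  note mi = main_inv[OF e]
  show ?thesis
  proof (cases "even (length (sgp u))")
    case True then show ?thesis using mi by (simp add: sig_def kk_def vv_def)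
  next
    case False
    then obtain c X where X: "sgp u = c # X" by (cases "sgp u") auto
    then show ?thesis using mi False A3[of c] by (simp add: sig_def kk_def vv_def)
  qed
qed

lemma sig_sig_bound: "3 * length (sig (sig v)) \<le> 2 * length v + 4"
proof (cases "even (length v)")
  case True then show ?thesis using sig_bound_even[of v] by (simp add: sig_def)
next
  case False then show ?thesis using sig_bound_even[of "lY # v"] by (simp add: sig_def)
qed

lemma sig_sig_3: "length (sig (sig [a,b,c])) \<le> 2"
  by (cases a rule: letter_cases; cases b rule: letter_cases; cases c rule: letter_cases)
     (simp_all add: sig_def)

lemma phy_phy_shrink: "3 \<le> length v \<Longrightarrow> length (phy (phy v)) < length v"
proof -
  assume l: "3 \<le> length v"
  have "length (phy (phy v)) \<le> length (sig (sig v))" by (simp add: phy_phy length_red)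
  moreover have "length (sig (sig v)) < length v"
  proof (cases "length v = 3")
    case True
    then obtain a b c where "v = [a,b,c]" by (auto simp: length_Suc_conv numeral_3_eq_3)
    then show ?thesis using sig_sig_3[of a b c] by simp
  next
    case False
    show ?thesis
    proof (cases "even (length v)")
      case True then show ?thesis using sig_bound_even[of v] l by (simp add: sig_def)
    next
      case odd: False
      have "5 \<le> length v" using l odd False by presburger
      then show ?thesis using sig_sig_bound[of v] by simp
    qed
  qed
  ultimately show ?thesis by simp
qed

lemma phy_two: "phy [a,b] \<in> Nty"
  by (cases a rule: letter_cases; cases b rule: letter_cases) (simp_all add: phy_sig sig_def Nty_def red_eval)

lemma phy_terminates: "\<exists>k. (phy ^^ k) v \<in> Nty"
proof (induction "length v + length (phy v)" arbitrary: v rule: less_induct)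
  case less
  show ?case
  proof (cases "length v \<le> 2")
    case True
    then consider "v = []" | a where "v = [a]" | a b where "v = [a,b]"
      by (cases v; cases "tl v"; auto simp: length_Suc_conv)
    then show ?thesis
    proof cases
      case 1 then show ?thesis by (intro exI[of _ 0]) (simp add: Nty_def)
    next
      case (2 a) then show ?thesis by (intro exI[of _ 0]) (cases a rule: letter_cases; simp add: Nty_def)
    next
      case (3 a b) then show ?thesis using phy_two by (intro exI[of _ 1]) simp
    qed
  next
    case False
    then have "length (phy v) + length (phy (phy v)) < length v + length (phy v)"
      using phy_phy_shrink[of v] by simp
    then obtain k where "(phy ^^ k) (phy v) \<in> Nty" using less by blast
    then show ?thesis by (intro exI[of _ "Suc k"]) (simp add: funpow_Suc_right del: funpow.simps)
  qed
qed


theorem mainTheorem14: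
  fixes \<psi> :: "letter list \<Rightarrow> letter list"
  assumes hom: "\<psi> \<in> hom (free_group2\<lparr>carrier := H_set\<rparr>) free_group2"
    and px: "\<psi> gx = gy"
    and py2: "\<psi> (gy \<otimes>\<^bsub>free_group2\<^esub> gy) = gy_inv \<otimes>\<^bsub>free_group2\<^esub> gx_inv"
    and pc: "\<psi> (gy_inv \<otimes>\<^bsub>free_group2\<^esub> gx \<otimes>\<^bsub>free_group2\<^esub> gy) = \<one>\<^bsub>free_group2\<^esub>"
  shows "\<forall>w \<in> carrier free_group2. \<exists>k::nat. (psi_hat \<psi> ^^ k) w \<in> N_set"
proof
  fix w assume "w \<in> carrier free_group2"
  then have r: "reduced w" by (simp add: fg_carrier)
  obtain k where k: "(phy ^^ k) (toTY w) \<in> Nty" using phy_terminates by blast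
  have rk: "reduced ((phx ^^ k) w)" using r by (cases k) (simp_all add: phx_def)
  have "(psi_hat \<psi> ^^ k) w = (phx ^^ k) w" by (rule psi_hat_iter[OF hom px py2 pc r])
  also have "\<dots> = toXY (toTY ((phx ^^ k) w))" using toXY_toTY[OF rk] by simp
  also have "\<dots> = toXY ((phy ^^ k) (toTY w))" by (simp add: toTY_iter)
  finally have "(psi_hat \<psi> ^^ k) w \<in> N_set" using toXY_N[OF k] by simp
  then show "\<exists>k::nat. (psi_hat \<psi> ^^ k) w \<in> N_set" by blast
qed

end
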